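(* Let $G=\bigcap_{i\in\mathcal I}G_i$ be a nonempty bounded domain in $\mathbb R^d$, where $\mathcal I$ is a nonempty finite index set and each $G_i$ is a nonempty domain. Then the function $D:[0,\infty)\to[0,\infty]$ defined by $D(0)=0$ and, for $r>0$, $$D(r)=\sup_{\emptyset\ne\mathcal J\subset\mathcal I}\sup\Big\{\mathrm{dist}\Big(x,\bigcap_{j\in\mathcal J}(\partial G_j\cap\partial G)\Big):x\in\bigcap_{j\in\mathcal J}U_r(\partial G_j\cap\partial G)\Big\}$$ satisfies $D(r)\to0$ as $r\to0$.
   Context: $\mathrm{dist}(x,S)=\inf\{\|x-y\|:y\in S\}$ with $\mathrm{dist}(x,\emptyset)=\infty$; for $r>0$, $U_r(S)=\{x\in\mathbb R^d:\mathrm{dist}(x,S)\le r\}$, with $U_r(\emptyset)=\emptyset$; the supremum over an empty set is $0$. *)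

theory Defs
  imports "HOL-Analysis.Analysis"
begin

definition edist_set :: "'a::metric_space \<Rightarrow> 'a set \<Rightarrow> ereal" where
  "edist_set x S = (if S = {} then \<infinity> else ereal (infdist x S))"

text \<open>Closed r-neighbourhood U_r(S) = {x. dist(x,S) \<le> r}; automatically U_r({}) = {}.\<close>
definition nbhd :: "real \<Rightarrow> 'a::metric_space set \<Rightarrow> 'a set" where
  "nbhd r S = {x. edist_set x S \<le> ereal r}"

definition sup0 :: "ereal set \<Rightarrow> ereal" where
  "sup0 A = (if A = {} then 0 else Sup A)"

definition domain :: "'a::topological_space set \<Rightarrow> bool" where
  "domain S \<longleftrightarrow> S \<noteq> {} \<and> open S \<and> connected S"

definition Dfun :: "'i set \<Rightarrow> ('i \<Rightarrow> 'a::euclidean_space set) \<Rightarrow> 'a set \<Rightarrow> real \<Rightarrow> ereal" where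
  "Dfun I Gs G r =
     (if r = 0 then 0 else
      sup0 ((\<lambda>J. sup0 ((\<lambda>x. edist_set x (\<Inter>j\<in>J. frontier (Gs j) \<inter> frontier G))
                         ` (\<Inter>j\<in>J. nbhd r (frontier (Gs j) \<inter> frontier G))))
            ` {J. J \<noteq> {} \<and> J \<subseteq> I}))"

end

theory Submission
  imports Defs
begin

lemma pos_min_on_compact:
  fixes g :: "'a::metric_space \<Rightarrow> real"
  assumes "compact A" "continuous_on A g" "\<And>x. x \<in> A \<Longrightarrow> g x > 0"
  shows "\<exists>m>0. \<forall>x\<in>A. m \<le> g x"
proof (cases "A = {}")
  case True then show ?thesis by (intro exI[of _ 1]) auto
next
  case False
  from continuous_attains_inf[OF assms(1) False assms(2)] obtain x0 where
    "x0 \<in> A" "\<forall>y\<in>A. g x0 \<le> g y" by blast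
  then show ?thesis using assms(3) by blast
qed

lemma core:
  fixes F :: "'j \<Rightarrow> 'a::euclidean_space set"
  assumes fin: "finite J" "J \<noteq> {}" and cpt: "\<And>j. j\<in>J \<Longrightarrow> compact (F j)" and "\<epsilon> > 0"
  obtains \<delta> where "\<delta> > 0" "\<And>r x. 0 < r \<Longrightarrow> r < \<delta> \<Longrightarrow> \<forall>j\<in>J. F j \<noteq> {} \<and> infdist x (F j) \<le> r
           \<Longrightarrow> (\<Inter>j\<in>J. F j) \<noteq> {} \<and> infdist x (\<Inter>j\<in>J. F j) < \<epsilon>"
proof (cases "\<exists>j\<in>J. F j = {}")
  case True
  show ?thesis by (rule that[of 1]) (use True in auto)
next
  case False
  obtain j0 where j0: "j0 \<in> J" using fin by blast
  have Fj0: "F j0 \<noteq> {}" using False j0 by blast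
  define K where "K = (\<Inter>j\<in>J. F j)"
  define g where "g x = (\<Sum>j\<in>J. infdist x (F j))" for x :: 'a
  define B where "B = {x. infdist x (F j0) \<le> 1}"
  define A where "A = {x\<in>B. K = {} \<or> \<epsilon> \<le> infdist x K}"
  have clK: "closed K" unfolding K_def using cpt by (intro closed_INT) (auto intro: compact_imp_closed)
  have clB: "closed B" unfolding B_def
    by (rule closed_Collect_le[OF continuous_on_infdist[OF continuous_on_id] continuous_on_const])
  have clA: "closed A"
  proof (cases "K = {}")
    case True then show ?thesis using clB unfolding A_def by simp
  next
    case False
    have "A = B \<inter> {x. \<epsilon> \<le> infdist x K}" using False unfolding A_def by auto
    moreover have "closed {x. \<epsilon> \<le> infdist x K}"
      by (rule closed_Collect_le[OF continuous_on_const continuous_on_infdist[OF continuous_on_id]])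
    ultimately show ?thesis using clB by auto
  qed
  have "bounded (F j0)" using cpt j0 compact_imp_bounded by blast
  then obtain R where R: "\<forall>y\<in>F j0. norm y \<le> R" by (auto simp: bounded_iff)
  have "B \<subseteq> cball 0 (R + 1)"
  proof
    fix x assume "x \<in> B"
    then have "infdist x (F j0) \<le> 1" unfolding B_def by auto
    moreover obtain y where "y \<in> F j0" "infdist x (F j0) = dist x y"
      using infdist_attains_inf[of "F j0" x] cpt j0 Fj0 compact_imp_closed by blast
    ultimately show "x \<in> cball 0 (R+1)"
    proof -
      have "norm x \<le> norm y + norm (x - y)" by (rule norm_triangle_sub)
      moreover have "norm (x - y) \<le> 1" using \<open>infdist x (F j0) \<le> 1\<close> \<open>infdist x (F j0) = dist x y\<close>
        by (simp add: dist_norm)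
      moreover have "norm y \<le> R" using R \<open>y \<in> F j0\<close> by blast
      ultimately show ?thesis by simp
    qed
  qed
  moreover have "A \<subseteq> B" unfolding A_def by auto
  ultimately have "bounded A" using bounded_subset[OF bounded_cball] by blast
  with clA have cA: "compact A" by (simp add: compact_eq_bounded_closed)
  have cg: "continuous_on A g" unfolding g_def
    by (intro continuous_on_sum continuous_on_infdist continuous_on_id)
  have gpos: "g x > 0" if "x \<in> A" for x
  proof -
    have ge: "g x \<ge> 0" unfolding g_def by (intro sum_nonneg) (auto simp: infdist_nonneg)
    show ?thesis
    proof (rule ccontr)
      assume "\<not> g x > 0"
      then have "g x = 0" using ge by simp
      then have z: "\<forall>j\<in>J. infdist x (F j) = 0" unfolding g_def
        by (simp add: sum_nonneg_eq_0_iff[OF fin(1)] infdist_nonneg)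
      have "\<forall>j\<in>J. x \<in> F j"
      proof
        fix j assume j: "j \<in> J"
        then have "closed (F j)" "F j \<noteq> {}" using cpt False compact_imp_closed by auto
        then show "x \<in> F j" using z j by (simp add: in_closed_iff_infdist_zero)
      qed
      then have "x \<in> K" unfolding K_def by blast
      then have "K \<noteq> {}" "infdist x K = 0" by auto
      then show False using that \<open>\<epsilon> > 0\<close> unfolding A_def by auto
    qed
  qed
  obtain m where m: "m > 0" "\<forall>x\<in>A. m \<le> g x" using pos_min_on_compact[OF cA cg gpos] by blast
  have cJ: "card J > 0" using fin by auto
  define \<delta> where "\<delta> = min 1 (m / card J)"
  have d0: "\<delta> > 0" unfolding \<delta>_def using m cJ by auto
  have main: "(\<Inter>j\<in>J. F j) \<noteq> {} \<and> infdist x (\<Inter>j\<in>J. F j) < \<epsilon>"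
    if r0: "0 < r" "r < \<delta>" and x: "\<forall>j\<in>J. F j \<noteq> {} \<and> infdist x (F j) \<le> r" for r x
  proof -
    have r: "0 < r" "r < \<delta>" using r0 by auto
    have "r < 1" using r unfolding \<delta>_def by simp
    then have "x \<in> B" using x j0 unfolding B_def by fastforce
    have "g x \<le> card J * r" unfolding g_def using x by (intro sum_bounded_above) auto
    also have "\<dots> < card J * (m / card J)" using r cJ unfolding \<delta>_def
      by (intro mult_strict_left_mono) auto
    also have "\<dots> = m" using cJ by auto
    finally have "g x < m" .
    then have "x \<notin> A" using m(2) by (metis leD)
    then have "\<not> (K = {} \<or> \<epsilon> \<le> infdist x K)" using \<open>x \<in> B\<close> unfolding A_def by blast
    then have "K \<noteq> {} \<and> infdist x K < \<epsilon>" by (simp add: not_le)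
    then show "(\<Inter>j\<in>J. F j) \<noteq> {} \<and> infdist x (\<Inter>j\<in>J. F j) < \<epsilon>"
      unfolding K_def .
  qed
  show ?thesis by (rule that[OF d0 main])
qed

lemma sup0_nonneg: "(\<And>y. y \<in> A \<Longrightarrow> 0 \<le> y) \<Longrightarrow> 0 \<le> sup0 A"
proof (cases "A = {}")
  case True then show ?thesis by (simp add: sup0_def)
next
  case False
  assume h: "\<And>y. y \<in> A \<Longrightarrow> 0 \<le> y"
  obtain y where "y \<in> A" using False by blast
  then have "0 \<le> y" "y \<le> Sup A" using h by (auto intro: Sup_upper)
  then show ?thesis using False by (simp add: sup0_def)
qed

lemma sup0_le: "0 \<le> c \<Longrightarrow> (\<And>y. y \<in> A \<Longrightarrow> y \<le> c) \<Longrightarrow> sup0 A \<le> c"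
  unfolding sup0_def by (simp add: Sup_least)

lemma edist_nonneg: "0 \<le> edist_set x S"
  unfolding edist_set_def by (auto simp: infdist_nonneg)

theorem lemmaA2:
  fixes I :: "'i set" and Gs :: "'i \<Rightarrow> 'a::euclidean_space set" and G :: "'a set"
  assumes "finite I" and "I \<noteq> {}"
    and "\<And>i. i \<in> I \<Longrightarrow> domain (Gs i)"
    and "G = (\<Inter>i\<in>I. Gs i)"
    and "domain G" and "bounded G"
  shows "(Dfun I Gs G \<longlongrightarrow> 0) (at_right 0)"
proof -
  define F where "F j = frontier (Gs j) \<inter> frontier G" for j
  define Js where "Js = {J. J \<noteq> {} \<and> J \<subseteq> I}"
  define inner where "inner J r = sup0 ((\<lambda>x. edist_set x (\<Inter>j\<in>J. F j))
                         ` (\<Inter>j\<in>J. nbhd r (F j)))" for J r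
  have Deq: "Dfun I Gs G r = sup0 ((\<lambda>J. inner J r) ` Js)" if "r \<noteq> 0" for r
    using that unfolding Dfun_def inner_def F_def Js_def by simp
  have finJs: "finite Js" unfolding Js_def using assms(1) by (auto intro: finite_subset[of _ "Pow I"])
  have cF: "compact (F j)" for j
  proof -
    have "compact (frontier G)" using assms(6) by (rule compact_frontier_bounded)
    then show ?thesis unfolding F_def by (simp add: closed_Int_compact)
  qed
  have key: "eventually (\<lambda>r. inner J r \<le> ereal e) (at_right 0)" if "J \<in> Js" "e > 0" for J e
  proof -
    have J0: "J \<noteq> {}" "J \<subseteq> I" using that(1) unfolding Js_def by auto
    have J: "finite J" "J \<noteq> {}" using finite_subset[OF J0(2) assms(1)] J0(1) by auto
    obtain \<delta> where d: "\<delta> > 0" and H: "\<And>r x. 0 < r \<Longrightarrow> r < \<delta> \<Longrightarrow> \<forall>j\<in>J. F j \<noteq> {} \<and> infdist x (F j) \<le> r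
           \<Longrightarrow> (\<Inter>j\<in>J. F j) \<noteq> {} \<and> infdist x (\<Inter>j\<in>J. F j) < e"
      using core[of J F e, OF J cF \<open>e>0\<close>] by metis
    show ?thesis unfolding eventually_at_right_field
    proof (intro exI[of _ \<delta>] conjI allI impI)
      show "0 < \<delta>" by fact
      fix r :: real assume r: "0 < r" "r < \<delta>"
      show "inner J r \<le> ereal e" unfolding inner_def
      proof (rule sup0_le)
        show "0 \<le> ereal e" using \<open>e>0\<close> by simp
        fix y assume "y \<in> (\<lambda>x. edist_set x (\<Inter>j\<in>J. F j)) ` (\<Inter>j\<in>J. nbhd r (F j))"
        then obtain x where y: "y = edist_set x (\<Inter>j\<in>J. F j)" and x: "\<forall>j\<in>J. x \<in> nbhd r (F j)" by blast
        have "\<forall>j\<in>J. F j \<noteq> {} \<and> infdist x (F j) \<le> r"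
          using x unfolding nbhd_def edist_set_def by (auto split: if_splits)
        then have "(\<Inter>j\<in>J. F j) \<noteq> {} \<and> infdist x (\<Inter>j\<in>J. F j) < e" by (rule H[OF r])
        then show "y \<le> ereal e" unfolding y edist_set_def by simp
      qed
    qed
  qed
  show ?thesis
  proof (rule order_tendstoI)
    fix a :: ereal assume "a < 0"
    have "0 \<le> Dfun I Gs G r" if "r > 0" for r
      unfolding Deq[OF order.strict_implies_not_eq[OF that, symmetric]] inner_def
      by (intro sup0_nonneg) (auto intro!: sup0_nonneg simp: edist_nonneg)
    then show "eventually (\<lambda>r. a < Dfun I Gs G r) (at_right 0)"
      using \<open>a < 0\<close> eventually_at_right_less[of "0::real"]
      by (smt (verit) eventually_mono order_less_le_trans)
  next
    fix a :: ereal assume "0 < a"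
    then obtain e where e: "0 < ereal e" "ereal e < a" using ereal_dense2 by blast
    have "eventually (\<lambda>r. \<forall>J\<in>Js. inner J r \<le> ereal e) (at_right 0)"
      using key e(1) by (intro eventually_ball_finite finJs) auto
    then have "eventually (\<lambda>r. r > 0 \<and> (\<forall>J\<in>Js. inner J r \<le> ereal e)) (at_right 0)"
      using eventually_at_right_less[of "0::real"] by (auto elim: eventually_elim2)
    then show "eventually (\<lambda>r. Dfun I Gs G r < a) (at_right 0)"
    proof (rule eventually_mono)
      fix r :: real assume r: "r > 0 \<and> (\<forall>J\<in>Js. inner J r \<le> ereal e)"
      then have "Dfun I Gs G r \<le> ereal e"
        using e(1) by (subst Deq) (auto intro!: sup0_le)
      then show "Dfun I Gs G r < a" using e(2) by simp
    qed
  qed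
qed

end
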